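(* Let $\phi,\chi,\psi$ be Dirichlet characters of conductors $h,k,q$ respectively, and let $a,b$ be positive integers forming an admissible index (i.e. such that all the limits and series below converge). Assume $\phi\chi\psi(-1)=(-1)^{a+b+1}$. Then $$\tau(\overline{\phi})\,\tau(\overline{\chi})\,\tau(\overline{\psi})\,L(0,a,b\,;\phi,\chi,\psi)=\sum_{j=1}^{h-1}\sum_{l=1}^{k-1}\sum_{r=1}^{q-1}\overline{\phi}(j)\,\overline{\chi}(l)\,\overline{\psi}(r)\,U\!\left(a,b\,;\tfrac{j}{h}+\tfrac{r}{q},\tfrac{l}{k}+\tfrac{r}{q}\right).$$
   Context: For real $x,y$, $T(0,a,b\,;x,y):=\lim_{R\to\infty}\sum_{m,n\ge1,\ m+n\le R}\frac{e^{2\pi i m x}e^{2\pi i n y}}{n^a (m+n)^b}$ (the Lerch type Tornheim double zeta function at $(0,a,b)$), and $U$ is defined by $2U(a,b\,;x,y):=T(0,a,b\,;x,y)-(-1)^{a+b}T(0,a,b\,;-x,-y)$. Further, $$L(0,a,b\,;\phi,\chi,\psi):=\lim_{R\to\infty}\sum_{m,n\ge1,\ m+n\le R}\frac{\phi(m)\chi(n)\psi(m+n)}{n^a(m+n)^b},$$ and for a character $\chi$ of conductor $k$ the Gauss sum is $\tau(\chi):=\sum_{l=1}^{k-1}\chi(l)e^{2\pi i l/k}$. *)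

theory Defs
  imports "HOL-Analysis.Analysis"
begin

definition dirichlet_char :: "nat \<Rightarrow> (int \<Rightarrow> complex) \<Rightarrow> bool" where
  "dirichlet_char k \<theta> \<longleftrightarrow> k > 0 \<and> \<theta> 1 = 1 \<and>
     (\<forall>m n. \<theta> (m * n) = \<theta> m * \<theta> n) \<and>
     (\<forall>n. \<theta> (n + int k) = \<theta> n) \<and>
     (\<forall>n. \<theta> n = 0 \<longleftrightarrow> \<not> coprime n (int k))"

text \<open>Primitive character modulo k (i.e. a character of conductor k): there is no
  proper divisor d of k such that chi(n) = 1 whenever n = 1 mod d and n coprime to k.\<close>
definition primitive_char :: "nat \<Rightarrow> (int \<Rightarrow> complex) \<Rightarrow> bool" where
  "primitive_char k \<theta> \<longleftrightarrow> dirichlet_char k \<theta> \<and>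
     \<not> (\<exists>d. d dvd k \<and> d < k \<and>
          (\<forall>n. coprime n (int k) \<and> n mod int d = 1 mod int d \<longrightarrow> \<theta> n = 1))"

definition gauss_sum :: "nat \<Rightarrow> (int \<Rightarrow> complex) \<Rightarrow> complex" where
  "gauss_sum k \<theta> = (\<Sum>l = 1..int k - 1. \<theta> l * exp (2 * of_real pi * \<i> * of_int l / of_nat k))"

definition tri :: "nat \<Rightarrow> (nat \<times> nat) set" where
  "tri R = {(m, n). 1 \<le> m \<and> 1 \<le> n \<and> m + n \<le> R}"

definition T0_partial :: "nat \<Rightarrow> nat \<Rightarrow> real \<Rightarrow> real \<Rightarrow> nat \<Rightarrow> complex" where
  "T0_partial a b x y R = (\<Sum>(m, n)\<in>tri R.
      exp (2 * of_real pi * \<i> * of_nat m * of_real x) *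
      exp (2 * of_real pi * \<i> * of_nat n * of_real y) /
      (of_nat n ^ a * of_nat (m + n) ^ b))"

definition T0 :: "nat \<Rightarrow> nat \<Rightarrow> real \<Rightarrow> real \<Rightarrow> complex" where
  "T0 a b x y = lim (T0_partial a b x y)"

definition U :: "nat \<Rightarrow> nat \<Rightarrow> real \<Rightarrow> real \<Rightarrow> complex" where
  "U a b x y = (T0 a b x y - (-1) ^ (a + b) * T0 a b (- x) (- y)) / 2"

definition L0_partial :: "nat \<Rightarrow> nat \<Rightarrow> (int \<Rightarrow> complex) \<Rightarrow> (int \<Rightarrow> complex) \<Rightarrow>
    (int \<Rightarrow> complex) \<Rightarrow> nat \<Rightarrow> complex" where
  "L0_partial a b \<phi> \<theta> \<psi> R = (\<Sum>(m, n)\<in>tri R.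
      \<phi> (int m) * \<theta> (int n) * \<psi> (int (m + n)) / (of_nat n ^ a * of_nat (m + n) ^ b))"

definition L0 :: "nat \<Rightarrow> nat \<Rightarrow> (int \<Rightarrow> complex) \<Rightarrow> (int \<Rightarrow> complex) \<Rightarrow>
    (int \<Rightarrow> complex) \<Rightarrow> complex" where
  "L0 a b \<phi> \<theta> \<psi> = lim (L0_partial a b \<phi> \<theta> \<psi>)"

end

theory Submission
  imports Defs "HOL-Number_Theory.Number_Theory"
begin

lemma dc_shift:
  assumes "dirichlet_char k \<theta>"
  shows "\<theta> (n + int k * t) = \<theta> n"
proof -
  have per: "\<And>n. \<theta> (n + int k) = \<theta> n" using assms by (simp add: dirichlet_char_def)
  have pos: "\<And>n (s::nat). \<theta> (n + int k * int s) = \<theta> n"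
  proof -
    fix n s show "\<theta> (n + int k * int s) = \<theta> n"
    proof (induction s)
      case 0 then show ?case by simp
    next
      case (Suc s)
      have "\<theta> (n + int k * int (Suc s)) = \<theta> ((n + int k * int s) + int k)" by (simp add: algebra_simps)
      then show ?case using per Suc by simp
    qed
  qed
  show ?thesis
  proof (cases "t \<ge> 0")
    case True then show ?thesis using pos[of n "nat t"] by simp
  next
    case False
    have eq: "n + int k * t + int k * int (nat (- t)) = n" using False by simp
    show ?thesis using pos[of "n + int k * t" "nat (- t)"] unfolding eq by simp
  qed
qed

lemma dc_cong:
  assumes "dirichlet_char k \<theta>" "[a = b] (mod int k)"
  shows "\<theta> a = \<theta> b"
proof -
  obtain t where "b = a + int k * t" using assms(2) by (auto simp: cong_iff_lin)
  then show ?thesis using dc_shift[OF assms(1)] by simp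
qed

lemma dc_pow:
  assumes "dirichlet_char k \<theta>"
  shows "\<theta> (n ^ N) = \<theta> n ^ N"
  using assms by (induction N) (auto simp: dirichlet_char_def)

lemma dc_norm:
  assumes "dirichlet_char k \<theta>" "coprime n (int k)"
  shows "norm (\<theta> n) = 1"
proof -
  have kp: "k > 0" using assms by (simp add: dirichlet_char_def)
  define a where "a = nat (n mod int k)"
  have ai: "int a = n mod int k" using kp by (simp add: a_def)
  have c1: "\<theta> n = \<theta> (int a)" using ai dc_cong[OF assms(1)] by (metis cong_mod_right cong_refl)
  have "coprime (n mod int k) (int k)" using assms(2) kp by simp
  then have cop: "coprime a k" using ai by (metis coprime_int_iff)
  have "[a ^ totient k = 1] (mod k)" using euler_theorem[OF cop] .
  then have "[int a ^ totient k = 1] (mod int k)" by (metis cong_int_iff of_nat_1 of_nat_power)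
  then have "\<theta> (int a ^ totient k) = \<theta> 1" using dc_cong[OF assms(1)] by blast
  then have "\<theta> n ^ totient k = 1" using c1 dc_pow[OF assms(1)] assms(1) by (simp add: dirichlet_char_def)
  then have "norm (\<theta> n) ^ totient k = 1" by (metis norm_one norm_power)
  moreover have "totient k > 0" using kp by simp
  ultimately show ?thesis using power_eq_imp_eq_base[of "norm (\<theta> n)" "totient k" 1] by simp
qed


lemma sum_mult_perm:
  fixes g :: "int \<Rightarrow> complex"
  assumes kp: "k > 0" and per: "\<And>a b. [a = b] (mod int k) \<Longrightarrow> g a = g b"
    and cop: "coprime c (int k)"
  shows "(\<Sum>l\<in>{0..<int k}. g (l * c)) = (\<Sum>l\<in>{0..<int k}. g l)"
proof -
  define \<sigma> where "\<sigma> l = (l * c) mod int k" for l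
  have inj: "inj_on \<sigma> {0..<int k}"
  proof
    fix x y assume x: "x \<in> {0..<int k}" and y: "y \<in> {0..<int k}" and e: "\<sigma> x = \<sigma> y"
    have "[x * c = y * c] (mod int k)" using e by (simp add: \<sigma>_def cong_def)
    then have "[x = y] (mod int k)" using cop
      by (metis cong_mult_rcancel coprime_commute)
    then show "x = y" using x y cong_less_imp_eq_int by auto
  qed
  have sub: "\<sigma> ` {0..<int k} \<subseteq> {0..<int k}" using kp by (auto simp: \<sigma>_def)
  have im: "\<sigma> ` {0..<int k} = {0..<int k}" using endo_inj_surj[OF _ sub inj] by simp
  have "(\<Sum>l\<in>{0..<int k}. g (l * c)) = (\<Sum>l\<in>{0..<int k}. g (\<sigma> l))"
    by (rule sum.cong) (auto simp: \<sigma>_def intro!: per cong_mod_right cong_refl)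
  also have "\<dots> = (\<Sum>l\<in>\<sigma> ` {0..<int k}. g l)" using sum.reindex[OF inj, of g] by simp
  also have "\<dots> = (\<Sum>l\<in>{0..<int k}. g l)" using im by simp
  finally show ?thesis .
qed

definition eK :: "nat \<Rightarrow> int \<Rightarrow> complex" where
  "eK k a = exp (2 * of_real pi * \<i> * of_int a / of_nat k)"

lemma eK_cong:
  assumes "k > 0" "[a = b] (mod int k)"
  shows "eK k a = eK k b"
proof -
  obtain t where t: "b = a + int k * t" using assms(2) by (auto simp: cong_iff_lin)
  have "2 * of_real pi * \<i> * of_int b / of_nat k
        = 2 * of_real pi * \<i> * of_int a / of_nat k + (2 * of_int t * pi) * \<i>"
    using assms(1) by (simp add: t field_simps)
  then have "eK k b = eK k a * exp ((2 * of_int t * pi) * \<i>)"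
    by (simp add: eK_def exp_add)
  also have "exp ((2 * of_int t * pi) * \<i>) = 1" by (rule exp_integer_2pi) simp
  finally show ?thesis by simp
qed


definition GG :: "nat \<Rightarrow> (int \<Rightarrow> complex) \<Rightarrow> int \<Rightarrow> complex" where
  "GG k \<theta> n = (\<Sum>l\<in>{0..<int k}. cnj (\<theta> l) * eK k (l * n))"

lemma GG_coprime:
  assumes dc: "dirichlet_char k \<theta>" and cop: "coprime n (int k)"
  shows "GG k \<theta> n = \<theta> n * GG k \<theta> 1"
proof -
  have kp: "k > 0" using dc by (simp add: dirichlet_char_def)
  define g where "g l = cnj (\<theta> l) * eK k l" for l
  have per: "g a = g b" if "[a = b] (mod int k)" for a b
    using dc_cong[OF dc that] eK_cong[OF kp that] by (simp add: g_def)
  have "(\<Sum>l\<in>{0..<int k}. g (l * n)) = (\<Sum>l\<in>{0..<int k}. g l)"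
    by (rule sum_mult_perm[OF kp per cop])
  moreover have "(\<Sum>l\<in>{0..<int k}. g (l * n)) = cnj (\<theta> n) * GG k \<theta> n"
    using dc by (simp add: g_def GG_def sum_distrib_left dirichlet_char_def mult_ac)
  moreover have "(\<Sum>l\<in>{0..<int k}. g l) = GG k \<theta> 1" by (simp add: g_def GG_def)
  ultimately have e: "cnj (\<theta> n) * GG k \<theta> n = GG k \<theta> 1" by simp
  have "\<theta> n * cnj (\<theta> n) = 1"
    using dc_norm[OF dc cop] by (metis complex_norm_square of_real_1 power_one)
  then have "\<theta> n * (cnj (\<theta> n) * GG k \<theta> n) = GG k \<theta> n" by (metis mult.assoc mult_1)
  then show ?thesis using e by simp
qed

lemma GG_noncoprime:
  assumes pc: "primitive_char k \<theta>" and ncop: "\<not> coprime n (int k)"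
  shows "GG k \<theta> n = 0"
proof -
  have dc: "dirichlet_char k \<theta>" using pc by (simp add: primitive_char_def)
  have kp: "k > 0" using dc by (simp add: dirichlet_char_def)
  define d where "d = gcd n (int k)"
  have dpos: "d > 0" using kp by (simp add: d_def)
  have d1: "d \<noteq> 1" using ncop by (simp add: d_def coprime_iff_gcd_eq_1)
  have ddvd: "d dvd int k" "d dvd n" by (simp_all add: d_def)
  define k1 where "k1 = nat (int k div d)"
  have kk: "int k = int k1 * d" using ddvd dpos by (simp add: k1_def pos_imp_zdiv_nonneg_iff)
  have k1dvd: "k1 dvd k" using kk by (metis dvd_triv_left int_dvd_int_iff)
  have k1pos: "int k1 > 0" using kk kp dpos by (cases "k1 = 0") auto
  have d2: "d \<ge> 2" using dpos d1 by linarith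
  have "int k1 * 1 < int k1 * d" using k1pos d2 by (intro mult_strict_left_mono) auto
  then have "int k1 < int k" using kk by simp
  then have k1lt: "k1 < k" by simp
  obtain c where c: "coprime c (int k)" "c mod int k1 = 1 mod int k1" "\<theta> c \<noteq> 1"
    using pc k1dvd k1lt unfolding primitive_char_def by blast
  have c1: "int k1 dvd c - 1" using c(2) by (simp add: mod_eq_dvd_iff)
  define g where "g l = cnj (\<theta> l) * eK k (l * n)" for l
  have per: "g a = g b" if "[a = b] (mod int k)" for a b
  proof -
    have "[a * n = b * n] (mod int k)" using that by (rule cong_mult) simp
    then show ?thesis using dc_cong[OF dc that] eK_cong[OF kp] by (simp add: g_def)
  qed
  have "(\<Sum>l\<in>{0..<int k}. g (l * c)) = (\<Sum>l\<in>{0..<int k}. g l)"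
    by (rule sum_mult_perm[OF kp per c(1)])
  moreover have "g (l * c) = cnj (\<theta> c) * g l" for l
  proof -
    have "int k dvd (c - 1) * n" using kk c1 ddvd(2) by (simp add: mult_dvd_mono)
    then have "int k dvd l * c * n - l * n" by (metis dvd_mult mult.assoc right_diff_distrib mult.commute mult_1_right)
    then have "[l * c * n = l * n] (mod int k)" by (simp add: cong_iff_dvd_diff)
    then have "eK k (l * c * n) = eK k (l * n)" by (rule eK_cong[OF kp])
    then show ?thesis using dc by (simp add: g_def dirichlet_char_def)
  qed
  ultimately have "cnj (\<theta> c) * (\<Sum>l\<in>{0..<int k}. g l) = (\<Sum>l\<in>{0..<int k}. g l)"
    by (simp add: sum_distrib_left)
  moreover have "cnj (\<theta> c) \<noteq> 1" using c(3) by (metis complex_cnj_one complex_cnj_cnj)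
  ultimately have "(\<Sum>l\<in>{0..<int k}. g l) = 0"
    by (metis mult_cancel_right1 mult.commute)
  then show ?thesis by (simp add: GG_def g_def)
qed


lemma GG_all:
  assumes pc: "primitive_char k \<theta>"
  shows "GG k \<theta> n = \<theta> n * GG k \<theta> 1"
proof -
  have dc: "dirichlet_char k \<theta>" using pc by (simp add: primitive_char_def)
  show ?thesis
  proof (cases "coprime n (int k)")
    case True show ?thesis by (rule GG_coprime[OF dc True])
  next
    case False
    then have "\<theta> n = 0" using dc by (simp add: dirichlet_char_def)
    then show ?thesis using GG_noncoprime[OF pc False] by simp
  qed
qed

lemma GG_shift:
  assumes dc: "dirichlet_char k \<theta>" and k2: "k \<ge> 2"
  shows "GG k \<theta> n = (\<Sum>l\<in>{1..<k}. cnj (\<theta> (int l)) * eK k (int l * n))"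
proof -
  have "\<not> coprime 0 (int k)" using k2 by simp
  then have t0: "\<theta> 0 = 0" using dc by (simp add: dirichlet_char_def)
  have "{0..<int k} = insert 0 {1..<int k}" using k2 by auto
  then have "GG k \<theta> n = (\<Sum>l\<in>{1..<int k}. cnj (\<theta> l) * eK k (l * n))"
    by (simp add: GG_def t0)
  also have "{1..<int k} = int ` {1..<k}" by (simp add: image_int_atLeastLessThan)
  also have "(\<Sum>l\<in>int ` {1..<k}. cnj (\<theta> l) * eK k (l * n)) = (\<Sum>l\<in>{1..<k}. cnj (\<theta> (int l)) * eK k (int l * n))"
    by (simp add: sum.reindex)
  finally show ?thesis .
qed

lemma gauss_expand:
  assumes pc: "primitive_char k \<theta>"
  shows "\<theta> (int n) * gauss_sum k (\<lambda>n. cnj (\<theta> n)) =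
     (\<Sum>l\<in>{1..<k}. cnj (\<theta> (int l)) * exp (2 * of_real pi * \<i> * of_nat n * of_real (real l / real k)))"
proof -
  have dc: "dirichlet_char k \<theta>" using pc by (simp add: primitive_char_def)
  have kp: "k > 0" using dc by (simp add: dirichlet_char_def)
  show ?thesis
  proof (cases "k = 1")
    case True then show ?thesis by (simp add: gauss_sum_def)
  next
    case False
    then have k2: "k \<ge> 2" using kp by simp
    have "gauss_sum k (\<lambda>n. cnj (\<theta> n)) = (\<Sum>l\<in>{1..<k}. cnj (\<theta> (int l)) * eK k (int l * 1))"
    proof -
      have "{1..int k - 1} = {1..<int k}" by auto
      then have "{1..int k - 1} = int ` {1..<k}" by (simp add: image_int_atLeastLessThan)
      then show ?thesis by (simp add: gauss_sum_def sum.reindex eK_def)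
    qed
    also have "\<dots> = GG k \<theta> 1" using GG_shift[OF dc k2] by simp
    finally have g: "gauss_sum k (\<lambda>n. cnj (\<theta> n)) = GG k \<theta> 1" .
    have "\<theta> (int n) * gauss_sum k (\<lambda>n. cnj (\<theta> n)) = GG k \<theta> (int n)"
      using GG_all[OF pc, of "int n"] g by simp
    also have "\<dots> = (\<Sum>l\<in>{1..<k}. cnj (\<theta> (int l)) * eK k (int l * int n))"
      by (rule GG_shift[OF dc k2])
    also have "\<dots> = (\<Sum>l\<in>{1..<k}. cnj (\<theta> (int l)) * exp (2 * of_real pi * \<i> * of_nat n * of_real (real l / real k)))"
      by (rule sum.cong) (simp_all add: eK_def mult_ac)
    finally show ?thesis .
  qed
qed


lemma exp3:
  "exp (2 * of_real pi * \<i> * of_nat m * of_real x) * exp (2 * of_real pi * \<i> * of_nat n * of_real y) *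
   exp (2 * of_real pi * \<i> * of_nat (m + n) * of_real z) =
   exp (2 * of_real pi * \<i> * of_nat m * of_real (x + z)) * exp (2 * of_real pi * \<i> * of_nat n * of_real (y + z))"
  by (simp only: exp_add[symmetric]) (simp add: algebra_simps)

lemma exp_shift2:
  "exp (2 * of_real pi * \<i> * of_nat m * of_real (x - 2)) = exp (2 * of_real pi * \<i> * of_nat m * of_real x)"
proof -
  have eq: "2 * of_real pi * \<i> * of_nat m * of_real (x - 2) =
        2 * of_real pi * \<i> * of_nat m * of_real x + (2 * of_int (- 2 * int m) * pi) * \<i>"
    by (simp add: algebra_simps)
  have "exp (2 * of_real pi * \<i> * of_nat m * of_real (x - 2)) =
     exp (2 * of_real pi * \<i> * of_nat m * of_real x) * exp ((2 * of_int (- 2 * int m) * pi) * \<i>)"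
    by (subst eq) (rule exp_add)
  also have "exp ((2 * of_int (- 2 * int m) * pi) * \<i>) = 1" by (rule exp_integer_2pi) simp
  finally show ?thesis by simp
qed

lemma T0_shift2: "T0 a b (x - 2) (y - 2) = T0 a b x y"
proof -
  have "T0_partial a b (x - 2) (y - 2) = T0_partial a b x y"
    by (rule ext) (simp only: T0_partial_def exp_shift2)
  then show ?thesis by (simp add: T0_def)
qed

lemma flip: "sum f {1..<(N::nat)} = (\<Sum>j\<in>{1..<N}. f (N - j))"
  by (rule sum.reindex_bij_witness[of _ "\<lambda>j. N - j" "\<lambda>j. N - j"]) auto

lemma dc_neg:
  assumes "dirichlet_char k \<theta>" "j < k"
  shows "\<theta> (int (k - j)) = \<theta> (-1) * \<theta> (int j)"
proof -
  have "\<theta> (int (k - j)) = \<theta> (- int j + int k)" using assms(2) by (simp add: of_nat_diff)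
  also have "\<dots> = \<theta> (- int j)" using dc_shift[OF assms(1), of "- int j" 1] by simp
  also have "\<dots> = \<theta> ((-1) * int j)" by simp
  also have "\<dots> = \<theta> (-1) * \<theta> (int j)" using assms(1) unfolding dirichlet_char_def by blast
  finally show ?thesis .
qed


lemma triple_prod:
  fixes f g h :: "nat \<Rightarrow> complex"
  shows "sum f A * sum g B * sum h C / d = (\<Sum>i\<in>A. \<Sum>j\<in>B. \<Sum>k\<in>C. f i * g j * h k / d)"
proof -
  have "sum f A * sum g B * sum h C / d = (\<Sum>i\<in>A. f i * sum g B * sum h C / d)"
    by (simp add: sum_distrib_right sum_divide_distrib)
  also have "\<dots> = (\<Sum>i\<in>A. \<Sum>j\<in>B. f i * g j * sum h C / d)"
  proof (rule sum.cong[OF refl])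
    fix i
    have "f i * sum g B * sum h C / d = (\<Sum>j\<in>B. f i * g j) * (sum h C / d)" by (simp add: sum_distrib_left)
    also have "\<dots> = (\<Sum>j\<in>B. f i * g j * (sum h C / d))" by (rule sum_distrib_right)
    finally show "f i * sum g B * sum h C / d = (\<Sum>j\<in>B. f i * g j * sum h C / d)" by simp
  qed
  also have "\<dots> = (\<Sum>i\<in>A. \<Sum>j\<in>B. \<Sum>k\<in>C. f i * g j * h k / d)"
  proof (intro sum.cong refl)
    fix i j
    have "f i * g j * sum h C / d = (f i * g j / d) * sum h C" by simp
    also have "\<dots> = (\<Sum>k\<in>C. (f i * g j / d) * h k)" by (rule sum_distrib_left)
    finally show "f i * g j * sum h C / d = (\<Sum>k\<in>C. f i * g j * h k / d)" by simp
  qed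
  finally show ?thesis .
qed

lemma swap4:
  fixes F :: "'x \<Rightarrow> 'y \<Rightarrow> nat \<Rightarrow> nat \<Rightarrow> nat \<Rightarrow> complex"
  shows "(\<Sum>(m, n)\<in>T. \<Sum>j\<in>A. \<Sum>l\<in>B. \<Sum>r\<in>C. F m n j l r) =
         (\<Sum>j\<in>A. \<Sum>l\<in>B. \<Sum>r\<in>C. \<Sum>(m, n)\<in>T. F m n j l r)"
proof -
  have s: "\<And>(H::'x \<Rightarrow> 'y \<Rightarrow> nat \<Rightarrow> complex) S. (\<Sum>(m, n)\<in>T. \<Sum>j\<in>S. H m n j) = (\<Sum>j\<in>S. \<Sum>(m, n)\<in>T. H m n j)"
    by (simp only: split_def) (rule sum.swap)
  show ?thesis by (simp only: s)
qed

theorem proposition2: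
  fixes h k q a b :: nat and \<phi> \<theta> \<psi> :: "int \<Rightarrow> complex"
  assumes "primitive_char h \<phi>" and "primitive_char k \<theta>" and "primitive_char q \<psi>"
    and "a \<ge> 1" and "b \<ge> 1"
    and convL: "convergent (L0_partial a b \<phi> \<theta> \<psi>)"
    and convT: "\<And>j l r. j \<in> {1..<h} \<Longrightarrow> l \<in> {1..<k} \<Longrightarrow> r \<in> {1..<q} \<Longrightarrow>
        convergent (T0_partial a b (real j / real h + real r / real q)
                                   (real l / real k + real r / real q)) \<and>
        convergent (T0_partial a b (- (real j / real h + real r / real q))
                                   (- (real l / real k + real r / real q)))"
    and parity: "\<phi> (-1) * \<theta> (-1) * \<psi> (-1) = (-1) ^ (a + b + 1)"
  shows "gauss_sum h (\<lambda>n. cnj (\<phi> n)) * gauss_sum k (\<lambda>n. cnj (\<theta> n)) *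
           gauss_sum q (\<lambda>n. cnj (\<psi> n)) * L0 a b \<phi> \<theta> \<psi> =
         (\<Sum>j = 1..<h. \<Sum>l = 1..<k. \<Sum>r = 1..<q.
            cnj (\<phi> (int j)) * cnj (\<theta> (int l)) * cnj (\<psi> (int r)) *
            U a b (real j / real h + real r / real q) (real l / real k + real r / real q))"
proof -
  have dph: "dirichlet_char h \<phi>" and dth: "dirichlet_char k \<theta>" and dps: "dirichlet_char q \<psi>"
    using assms(1-3) by (simp_all add: primitive_char_def)
  have hp: "h > 0" and kp: "k > 0" and qp: "q > 0"
    using dph dth dps by (simp_all add: dirichlet_char_def)
  define tp where "tp = gauss_sum h (\<lambda>n. cnj (\<phi> n))"
  define tt where "tt = gauss_sum k (\<lambda>n. cnj (\<theta> n))"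
  define ts where "ts = gauss_sum q (\<lambda>n. cnj (\<psi> n))"
  define c where "c j l r = cnj (\<phi> (int j)) * cnj (\<theta> (int l)) * cnj (\<psi> (int r))" for j l r
  define X where "X j r = real j / real h + real r / real q" for j r
  define Y where "Y l r = real l / real k + real r / real q" for l r
  define E where "E n t = exp (2 * of_real pi * \<i> * of_nat n * of_real t)" for n t
  have ep: "\<phi> (int m) * tp = (\<Sum>j\<in>{1..<h}. cnj (\<phi> (int j)) * E m (real j / real h))" for m
    unfolding tp_def E_def by (rule gauss_expand[OF assms(1)])
  have et: "\<theta> (int m) * tt = (\<Sum>j\<in>{1..<k}. cnj (\<theta> (int j)) * E m (real j / real k))" for m
    unfolding tt_def E_def by (rule gauss_expand[OF assms(2)])
  have es: "\<psi> (int m) * ts = (\<Sum>j\<in>{1..<q}. cnj (\<psi> (int j)) * E m (real j / real q))" for m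
    unfolding ts_def E_def by (rule gauss_expand[OF assms(3)])
  have partial: "tp * tt * ts * L0_partial a b \<phi> \<theta> \<psi> R =
     (\<Sum>j\<in>{1..<h}. \<Sum>l\<in>{1..<k}. \<Sum>r\<in>{1..<q}. c j l r * T0_partial a b (X j r) (Y l r) R)" for R
  proof -
    define D where "D m n = (of_nat n ^ a * of_nat (m + n) ^ b :: complex)" for m n
    have "tp * tt * ts * L0_partial a b \<phi> \<theta> \<psi> R =
      (\<Sum>(m, n)\<in>tri R. (\<phi> (int m) * tp) * (\<theta> (int n) * tt) * (\<psi> (int (m + n)) * ts) / D m n)"
      unfolding L0_partial_def D_def by (simp add: sum_distrib_left case_prod_beta mult_ac)
    also have "\<dots> = (\<Sum>(m, n)\<in>tri R. \<Sum>j\<in>{1..<h}. \<Sum>l\<in>{1..<k}. \<Sum>r\<in>{1..<q}.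
         c j l r * (E m (X j r) * E n (Y l r) / D m n))"
    proof (rule sum.cong[OF refl], clarify)
      fix m n
      have "(\<phi> (int m) * tp) * (\<theta> (int n) * tt) * (\<psi> (int (m + n)) * ts) / D m n =
         (\<Sum>j\<in>{1..<h}. \<Sum>l\<in>{1..<k}. \<Sum>r\<in>{1..<q}.
           (cnj (\<phi> (int j)) * E m (real j / real h)) * (cnj (\<theta> (int l)) * E n (real l / real k)) *
           (cnj (\<psi> (int r)) * E (m + n) (real r / real q)) / D m n)"
        unfolding ep et es by (rule triple_prod)
      also have "\<dots> = (\<Sum>j\<in>{1..<h}. \<Sum>l\<in>{1..<k}. \<Sum>r\<in>{1..<q}.
         c j l r * (E m (X j r) * E n (Y l r) / D m n))"
      proof (intro sum.cong refl)
        fix j l r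
        have "E m (real j / real h) * E n (real l / real k) * E (m + n) (real r / real q) =
              E m (X j r) * E n (Y l r)"
          unfolding E_def X_def Y_def by (rule exp3)
        then show "(cnj (\<phi> (int j)) * E m (real j / real h)) * (cnj (\<theta> (int l)) * E n (real l / real k)) *
           (cnj (\<psi> (int r)) * E (m + n) (real r / real q)) / D m n =
           c j l r * (E m (X j r) * E n (Y l r) / D m n)"
          unfolding c_def by (simp add: mult_ac)
      qed
      finally show "(\<phi> (int m) * tp) * (\<theta> (int n) * tt) * (\<psi> (int (m + n)) * ts) / D m n =
         (\<Sum>j\<in>{1..<h}. \<Sum>l\<in>{1..<k}. \<Sum>r\<in>{1..<q}.
         c j l r * (E m (X j r) * E n (Y l r) / D m n))" .
    qed
    also have "\<dots> = (\<Sum>j\<in>{1..<h}. \<Sum>l\<in>{1..<k}. \<Sum>r\<in>{1..<q}. \<Sum>(m, n)\<in>tri R.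
         c j l r * (E m (X j r) * E n (Y l r) / D m n))"
      by (rule swap4)
    also have "\<dots> = (\<Sum>j\<in>{1..<h}. \<Sum>l\<in>{1..<k}. \<Sum>r\<in>{1..<q}. c j l r * T0_partial a b (X j r) (Y l r) R)"
      unfolding T0_partial_def E_def D_def by (simp add: sum_distrib_left case_prod_beta)
    finally show ?thesis .
  qed
  define S where "S = (\<Sum>j\<in>{1..<h}. \<Sum>l\<in>{1..<k}. \<Sum>r\<in>{1..<q}. c j l r * T0 a b (X j r) (Y l r))"
  have LL: "(\<lambda>R. tp * tt * ts * L0_partial a b \<phi> \<theta> \<psi> R) \<longlonglongrightarrow> tp * tt * ts * L0 a b \<phi> \<theta> \<psi>"
    using convL by (intro tendsto_mult_left) (simp add: L0_def convergent_LIMSEQ_iff)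
  have RR: "(\<lambda>R. \<Sum>j\<in>{1..<h}. \<Sum>l\<in>{1..<k}. \<Sum>r\<in>{1..<q}. c j l r * T0_partial a b (X j r) (Y l r) R)
            \<longlonglongrightarrow> S"
    unfolding S_def
  proof (intro tendsto_sum tendsto_mult_left)
    fix j l r assume "j \<in> {1..<h}" "l \<in> {1..<k}" "r \<in> {1..<q}"
    then show "(\<lambda>R. T0_partial a b (X j r) (Y l r) R) \<longlonglongrightarrow> T0 a b (X j r) (Y l r)"
      using convT unfolding X_def Y_def T0_def by (simp add: convergent_LIMSEQ_iff)
  qed
  have main: "tp * tt * ts * L0 a b \<phi> \<theta> \<psi> = S"
  proof -
    have "(\<lambda>R. tp * tt * ts * L0_partial a b \<phi> \<theta> \<psi> R) =
      (\<lambda>R. \<Sum>j\<in>{1..<h}. \<Sum>l\<in>{1..<k}. \<Sum>r\<in>{1..<q}. c j l r * T0_partial a b (X j r) (Y l r) R)"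
      using partial by (rule ext)
    then show ?thesis using LL RR LIMSEQ_unique by metis
  qed
  define s where "s = ((-1::complex) ^ (a + b))"
  have s2: "s * s = 1" by (simp add: s_def power_mult_distrib[symmetric] power_add[symmetric] flip: power2_eq_square power_mult)
  define S' where "S' = (\<Sum>j\<in>{1..<h}. \<Sum>l\<in>{1..<k}. \<Sum>r\<in>{1..<q}. c j l r * T0 a b (- X j r) (- Y l r))"
  have eps: "cnj (\<phi> (-1)) * cnj (\<theta> (-1)) * cnj (\<psi> (-1)) = - s"
  proof -
    have "cnj (\<phi> (-1)) * cnj (\<theta> (-1)) * cnj (\<psi> (-1)) = cnj ((-1) ^ (a + b + 1))"
      using parity by (metis complex_cnj_mult)
    then show ?thesis by (simp add: s_def)
  qed
  have "S' = (\<Sum>j\<in>{1..<h}. \<Sum>l\<in>{1..<k}. \<Sum>r\<in>{1..<q}.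
              c (h - j) (k - l) (q - r) * T0 a b (- X (h - j) (q - r)) (- Y (k - l) (q - r)))"
    unfolding S'_def
    apply (subst flip[of _ h])
    apply (rule sum.cong[OF refl])
    apply (subst flip[of _ k])
    apply (rule sum.cong[OF refl])
    apply (subst flip[of _ q])
    apply (rule refl)
    done
  also have "\<dots> = (\<Sum>j\<in>{1..<h}. \<Sum>l\<in>{1..<k}. \<Sum>r\<in>{1..<q}. (- s) * (c j l r * T0 a b (X j r) (Y l r)))"
  proof (intro sum.cong refl)
    fix j l r assume j: "j \<in> {1..<h}" and l: "l \<in> {1..<k}" and r: "r \<in> {1..<q}"
    have cc: "c (h - j) (k - l) (q - r) = (- s) * c j l r"
    proof -
      have p1: "\<phi> (int (h - j)) = \<phi> (-1) * \<phi> (int j)" using j by (intro dc_neg[OF dph]) simp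
      have p2: "\<theta> (int (k - l)) = \<theta> (-1) * \<theta> (int l)" using l by (intro dc_neg[OF dth]) simp
      have p3: "\<psi> (int (q - r)) = \<psi> (-1) * \<psi> (int r)" using r by (intro dc_neg[OF dps]) simp
      show ?thesis unfolding c_def eps[symmetric] p1 p2 p3 complex_cnj_mult by (simp only: mult_ac)
    qed
    have x: "- X (h - j) (q - r) = X j r - 2" using j r hp qp
      by (simp add: X_def of_nat_diff field_simps)
    have y: "- Y (k - l) (q - r) = Y l r - 2" using l r kp qp
      by (simp add: Y_def of_nat_diff field_simps)
    show "c (h - j) (k - l) (q - r) * T0 a b (- X (h - j) (q - r)) (- Y (k - l) (q - r)) =
          (- s) * (c j l r * T0 a b (X j r) (Y l r))"
      by (simp add: cc x y T0_shift2)
  qed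
  also have "\<dots> = (- s) * S" by (simp add: S_def sum_distrib_left)
  finally have SS: "S' = - s * S" .
  have "(\<Sum>j = 1..<h. \<Sum>l = 1..<k. \<Sum>r = 1..<q.
            cnj (\<phi> (int j)) * cnj (\<theta> (int l)) * cnj (\<psi> (int r)) *
            U a b (real j / real h + real r / real q) (real l / real k + real r / real q))
       = (\<Sum>j\<in>{1..<h}. \<Sum>l\<in>{1..<k}. \<Sum>r\<in>{1..<q}.
            (c j l r * T0 a b (X j r) (Y l r)) / 2 - (s / 2) * (c j l r * T0 a b (- X j r) (- Y l r)))"
    unfolding c_def X_def Y_def U_def s_def by (intro sum.cong refl) (simp add: field_simps)
  also have "\<dots> = S / 2 - (s / 2) * S'"
    unfolding S_def S'_def by (simp add: sum_subtractf sum_divide_distrib sum_distrib_left)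
  also have "\<dots> = S" using SS s2 by (simp add: field_simps)
  finally show ?thesis using main unfolding tp_def tt_def ts_def by simp
qed

end
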